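(* For $\mathbf b=\mathbf b_1+i\mathbf b_2\in\mathbb B^{n+1}_{\mathbb C}$ (with $\mathbf b_1,\mathbf b_2\in\mathbb R^{n+1}$), let $\Phi_{\mathbf b}:\mathbb B^{2n+2}\to\mathbb B^{2n+2}$ be $$\Phi_{\mathbf b}(\mathbf z)=\sqrt{1-|\mathbf b|^2}\,\frac{\mathbf z}{1+\bar{\mathbf b}\cdot\mathbf z}+\frac{1}{1+\sqrt{1-|\mathbf b|^2}}\Big(1+\frac{\sqrt{1-|\mathbf b|^2}}{1+\bar{\mathbf b}\cdot\mathbf z}\Big)\mathbf b,$$ where $\bar{\mathbf b}\cdot\mathbf z=\sum_j\bar b_jz_j$. Then: (1) $\Phi_{\mathbf b}$ extends to a $J_{\mathbb R}$-holomorphic diffeomorphism $\bar\Phi_{\mathbf b}:\bar{\mathbb B}^{2n+2}\to\bar{\mathbb B}^{2n+2}$. (2) At points of $\partial\mathbb B^{2n+2}$, $\bar\Phi_{\mathbf b}^*dr=W_{\mathbf b}\,dr$ and $\bar\Phi_{\mathbf b}^*\theta=W_{\mathbf b}\,\theta$, where, writing $\mathbf z=\mathbf x+i\mathbf y$, $$W_{\mathbf b}(\mathbf x,\mathbf y)=\frac{1-|\mathbf b_1|^2-|\mathbf b_2|^2}{(1+\mathbf b_1\cdot\mathbf x+\mathbf b_2\cdot\mathbf y)^2+(\mathbf b_2\cdot\mathbf x-\mathbf b_1\cdot\mathbf y)^2}.$$ (3) At points of $\partial\mathbb B^{2n+2}$, $$\bar\Phi_{\mathbf b}^*d\theta=W_{\mathbf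 b}\,d\theta+2(W_{\mathbf b}-W_{\mathbf b}^2)\,r\,dr\wedge\theta+dW_{\mathbf b}\wedge\theta+dr\wedge(dW_{\mathbf b}\circ J_{\mathbb R}).$$
   Context: Identify $\mathbb R^{2n+2}=\mathbb R^{n+1}_{\mathbf x}\times\mathbb R^{n+1}_{\mathbf y}$ with $\mathbb C^{n+1}$ via $\mathbf z=\mathbf x+i\mathbf y$, and the open unit ball $\mathbb B^{2n+2}$ with the complex unit ball $\mathbb B^{n+1}_{\mathbb C}$. $J_{\mathbb R}$ is the complex structure with $J_{\mathbb R}(\partial_{x_j})=-\partial_{y_j}$, $J_{\mathbb R}(\partial_{y_j})=\partial_{x_j}$; a map $\Phi$ is $J_{\mathbb R}$-holomorphic if $J_{\mathbb R}\circ D\Phi=D\Phi\circ J_{\mathbb R}$. $r=|\mathbf z|$, and $\theta=r^{-2}\sum_j(x_j\,dy_j-y_j\,dx_j)$ on $\mathbb R^{2n+2}\setminus\{0\}$ (equivalently $\theta=\frac1r dr\circ J_{\mathbb R}$). The exterior derivative convention is $d\beta(X,Y)=X(\beta(Y))-Y(\beta(X))-\beta([X,Y])$. Pullbacks are of forms on $\mathbb R^{2n+2}$ evaluated at boundary points (not restricted to the sphere). *)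

theory Defs
  imports "HOL-Analysis.Analysis"
begin

text \<open>R^(2n+2) is identified with C^(n+1) = complex ^ 'n (CARD('n) = n+1),
  via z = x + i y, i.e. x_j = Re (z$j), y_j = Im (z$j).  Tangent vectors are elements
  of the same space; dx_j(v) = Re (v$j), dy_j(v) = Im (v$j).\<close>

fun iter_dderiv :: "('a::real_normed_vector \<Rightarrow> 'b::real_normed_vector) \<Rightarrow> 'a list \<Rightarrow> 'a \<Rightarrow> 'b" where
  "iter_dderiv f [] = f"
| "iter_dderiv f (v # vs) = (\<lambda>x. frechet_derivative (iter_dderiv f vs) (at x) v)"

definition smooth_on_open :: "'a::real_normed_vector set \<Rightarrow> ('a \<Rightarrow> 'b::real_normed_vector) \<Rightarrow> bool" where
  "smooth_on_open U f \<longleftrightarrow> open U \<and> (\<forall>vs. \<forall>x\<in>U. iter_dderiv f vs differentiable (at x))"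

definition smooth_on :: "'a::real_normed_vector set \<Rightarrow> ('a \<Rightarrow> 'b::real_normed_vector) \<Rightarrow> bool" where
  "smooth_on S f \<longleftrightarrow> (\<exists>U g. S \<subseteq> U \<and> smooth_on_open U g \<and> (\<forall>x\<in>S. g x = f x))"

definition diffeo_betw :: "'a::real_normed_vector set \<Rightarrow> 'a set \<Rightarrow> ('a \<Rightarrow> 'a) \<Rightarrow> bool" where
  "diffeo_betw S T f \<longleftrightarrow> bij_betw f S T \<and> smooth_on S f \<and>
     (\<exists>g. smooth_on T g \<and> (\<forall>x\<in>S. g (f x) = x) \<and> (\<forall>y\<in>T. f (g y) = y))"

text \<open>The complex structure J_R: J(d/dx_j) = - d/dy_j, J(d/dy_j) = d/dx_j.\<close>
definition JR :: "complex ^ 'n \<Rightarrow> complex ^ 'n" where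
  "JR v = (\<chi> j. Complex (Im (v $ j)) (- Re (v $ j)))"

definition JR_holomorphic_on :: "(complex ^ 'n) set \<Rightarrow> (complex ^ 'n \<Rightarrow> complex ^ 'n) \<Rightarrow> bool" where
  "JR_holomorphic_on S f \<longleftrightarrow>
     (\<forall>z\<in>S. \<exists>D. (f has_derivative D) (at z within S) \<and> (\<forall>v. JR (D v) = D (JR v)))"

definition dfun :: "('a::real_normed_vector \<Rightarrow> real) \<Rightarrow> 'a \<Rightarrow> 'a \<Rightarrow> real" where
  "dfun f p v = frechet_derivative f (at p) v"

definition rad :: "complex ^ 'n \<Rightarrow> real" where
  "rad z = norm z"

definition dr :: "complex ^ 'n \<Rightarrow> complex ^ 'n \<Rightarrow> real" where
  "dr = dfun rad"

definition theta :: "complex ^ 'n \<Rightarrow> complex ^ 'n \<Rightarrow> real" where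
  "theta p v = (\<Sum>j\<in>UNIV. Re (p $ j) * Im (v $ j) - Im (p $ j) * Re (v $ j)) / (rad p)\<^sup>2"

text \<open>Exterior derivative of a 1-form field, with
  d beta(X,Y) = X(beta(Y)) - Y(beta(X)) - beta([X,Y]), evaluated on constant vector fields.\<close>
definition d1 :: "('a::real_normed_vector \<Rightarrow> 'a \<Rightarrow> real) \<Rightarrow> 'a \<Rightarrow> 'a \<Rightarrow> 'a \<Rightarrow> real" where
  "d1 \<beta> p v w = frechet_derivative (\<lambda>q. \<beta> q w) (at p) v - frechet_derivative (\<lambda>q. \<beta> q v) (at p) w"

text \<open>Wedge product of 1-forms (convention compatible with d above: d(f dg) = df \<and> dg).\<close>
definition wedge :: "('a \<Rightarrow> 'a \<Rightarrow> real) \<Rightarrow> ('a \<Rightarrow> 'a \<Rightarrow> real) \<Rightarrow> 'a \<Rightarrow> 'a \<Rightarrow> 'a \<Rightarrow> real" where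
  "wedge \<alpha> \<beta> p v w = \<alpha> p v * \<beta> p w - \<alpha> p w * \<beta> p v"

definition compJ :: "(complex ^ 'n \<Rightarrow> complex ^ 'n \<Rightarrow> real) \<Rightarrow> complex ^ 'n \<Rightarrow> complex ^ 'n \<Rightarrow> real" where
  "compJ \<alpha> p v = \<alpha> p (JR v)"

definition pullback1 :: "('a \<Rightarrow> 'b) \<Rightarrow> ('a \<Rightarrow> 'b) \<Rightarrow> ('b \<Rightarrow> 'b \<Rightarrow> real) \<Rightarrow> 'a \<Rightarrow> 'a \<Rightarrow> real" where
  "pullback1 F D \<beta> p v = \<beta> (F p) (D v)"

definition pullback2 :: "('a \<Rightarrow> 'b) \<Rightarrow> ('a \<Rightarrow> 'b) \<Rightarrow> ('b \<Rightarrow> 'b \<Rightarrow> 'b \<Rightarrow> real) \<Rightarrow> 'a \<Rightarrow> 'a \<Rightarrow> 'a \<Rightarrow> real" where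
  "pullback2 F D \<omega> p v w = \<omega> (F p) (D v) (D w)"

definition bdot :: "complex ^ 'n \<Rightarrow> complex ^ 'n \<Rightarrow> complex" where
  "bdot b z = (\<Sum>j\<in>UNIV. cnj (b $ j) * z $ j)"

definition PhiB :: "complex ^ 'n \<Rightarrow> complex ^ 'n \<Rightarrow> complex ^ 'n" where
  "PhiB b z = (let s = sqrt (1 - (norm b)\<^sup>2) in
     (\<chi> j. complex_of_real s * z $ j / (1 + bdot b z)
        + complex_of_real (1 / (1 + s)) * (1 + complex_of_real s / (1 + bdot b z)) * b $ j))"

definition WB :: "complex ^ 'n \<Rightarrow> complex ^ 'n \<Rightarrow> real" where
  "WB b z = (1 - (\<Sum>j\<in>UNIV. (Re (b $ j))\<^sup>2) - (\<Sum>j\<in>UNIV. (Im (b $ j))\<^sup>2)) /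
     ((1 + (\<Sum>j\<in>UNIV. Re (b $ j) * Re (z $ j)) + (\<Sum>j\<in>UNIV. Im (b $ j) * Im (z $ j)))\<^sup>2
      + ((\<Sum>j\<in>UNIV. Im (b $ j) * Re (z $ j)) - (\<Sum>j\<in>UNIV. Re (b $ j) * Im (z $ j)))\<^sup>2)"

end

theory Submission
  imports Defs
begin

lemma vec_has_derivative:
  fixes F :: "'n::finite \<Rightarrow> 'a::real_normed_vector \<Rightarrow> complex"
  assumes "\<And>j. (F j has_derivative D j) (at x within S)"
  shows "((\<lambda>y. \<chi> j. F j y) has_derivative (\<lambda>v. \<chi> j. D j v)) (at x within S)"
proof (subst has_derivative_componentwise_within, intro ballI)
  fix i :: "complex^'n" assume "i \<in> Basis"
  then obtain k u where i: "i = axis k u" and u: "u \<in> Basis" unfolding Basis_vec_def by auto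
  have "((\<lambda>y. F k y \<bullet> u) has_derivative (\<lambda>v. D k v \<bullet> u)) (at x within S)"
    using assms[of k] by (intro derivative_intros) auto
  then show "((\<lambda>y. (\<chi> j. F j y) \<bullet> i) has_derivative (\<lambda>v. (\<chi> j. D j v) \<bullet> i)) (at x within S)"
    by (simp add: i inner_axis)
qed

inductive smc :: "(complex^'n) set \<Rightarrow> (complex^'n \<Rightarrow> complex) \<Rightarrow> bool" for U where
  sconst: "smc U (\<lambda>x. c)"
| slin: "bounded_linear L \<Longrightarrow> (\<forall>v. L (JR v) = - \<i> * L v) \<Longrightarrow> smc U L"
| sadd: "smc U f \<Longrightarrow> smc U g \<Longrightarrow> smc U (\<lambda>x. f x + g x)"
| smult: "smc U f \<Longrightarrow> smc U g \<Longrightarrow> smc U (\<lambda>x. f x * g x)"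
| sinv: "smc U f \<Longrightarrow> (\<forall>x\<in>U. f x \<noteq> 0) \<Longrightarrow> smc U (\<lambda>x. inverse (f x))"

lemma smc_deriv:
  assumes "smc U f"
  shows "\<exists>D. (\<forall>x\<in>U. (f has_derivative D x) (at x) \<and> (\<forall>v. D x (JR v) = - \<i> * D x v))
            \<and> (\<forall>v. \<exists>g. smc U g \<and> (\<forall>x\<in>U. D x v = g x))"
  using assms
proof induction
  case (sconst c)
  show ?case
    by (rule exI[of _ "\<lambda>x v. 0"]) (auto intro: smc.sconst)
next
  case (slin L)
  show ?case
    using slin by (intro exI[of _ "\<lambda>x. L"]) (auto intro: smc.sconst bounded_linear.has_derivative[OF slin(1)] has_derivative_ident)
next
  case (sadd f g)
  then obtain Df Dg where f: "\<forall>x\<in>U. (f has_derivative Df x) (at x) \<and> (\<forall>v. Df x (JR v) = - \<i> * Df x v)"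
     "\<forall>v. \<exists>g. smc U g \<and> (\<forall>x\<in>U. Df x v = g x)"
    and g: "\<forall>x\<in>U. (g has_derivative Dg x) (at x) \<and> (\<forall>v. Dg x (JR v) = - \<i> * Dg x v)"
     "\<forall>v. \<exists>g. smc U g \<and> (\<forall>x\<in>U. Dg x v = g x)" by blast
  show ?case
  proof (intro exI[of _ "\<lambda>x v. Df x v + Dg x v"] conjI ballI allI)
    fix x assume "x \<in> U"
    then show "((\<lambda>x. f x + g x) has_derivative (\<lambda>v. Df x v + Dg x v)) (at x)"
      using f g by (auto intro: has_derivative_add)
    fix v show "Df x (JR v) + Dg x (JR v) = - \<i> * (Df x v + Dg x v)"
      using f g \<open>x \<in> U\<close> by (simp add: algebra_simps)
  next
    fix v
    obtain g1 where "smc U g1" "\<forall>x\<in>U. Df x v = g1 x" using f by blast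
    moreover obtain g2 where "smc U g2" "\<forall>x\<in>U. Dg x v = g2 x" using g by blast
    ultimately show "\<exists>h. smc U h \<and> (\<forall>x\<in>U. Df x v + Dg x v = h x)"
      by (intro exI[of _ "\<lambda>x. g1 x + g2 x"]) (auto intro: smc.sadd)
  qed
next
  case (smult f g)
  then obtain Df Dg where f: "\<forall>x\<in>U. (f has_derivative Df x) (at x) \<and> (\<forall>v. Df x (JR v) = - \<i> * Df x v)"
     "\<forall>v. \<exists>g. smc U g \<and> (\<forall>x\<in>U. Df x v = g x)"
    and g: "\<forall>x\<in>U. (g has_derivative Dg x) (at x) \<and> (\<forall>v. Dg x (JR v) = - \<i> * Dg x v)"
     "\<forall>v. \<exists>g. smc U g \<and> (\<forall>x\<in>U. Dg x v = g x)" by blast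
  show ?case
  proof (intro exI[of _ "\<lambda>x v. f x * Dg x v + Df x v * g x"] conjI ballI allI)
    fix x assume "x \<in> U"
    then show "((\<lambda>x. f x * g x) has_derivative (\<lambda>v. f x * Dg x v + Df x v * g x)) (at x)"
      using f g by (auto intro: has_derivative_mult)
    fix v show "f x * Dg x (JR v) + Df x (JR v) * g x = - \<i> * (f x * Dg x v + Df x v * g x)"
      using f g \<open>x \<in> U\<close> by (simp add: algebra_simps)
  next
    fix v
    obtain g1 where "smc U g1" "\<forall>x\<in>U. Df x v = g1 x" using f by blast
    moreover obtain g2 where "smc U g2" "\<forall>x\<in>U. Dg x v = g2 x" using g by blast
    ultimately show "\<exists>h. smc U h \<and> (\<forall>x\<in>U. f x * Dg x v + Df x v * g x = h x)"
      using smult.hyps by (intro exI[of _ "\<lambda>x. f x * g2 x + g1 x * g x"]) (auto intro: smc.sadd smc.smult)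
  qed
next
  case (sinv f)
  then obtain Df where f: "\<forall>x\<in>U. (f has_derivative Df x) (at x) \<and> (\<forall>v. Df x (JR v) = - \<i> * Df x v)"
     "\<forall>v. \<exists>g. smc U g \<and> (\<forall>x\<in>U. Df x v = g x)" by blast
  show ?case
  proof (intro exI[of _ "\<lambda>x v. - (inverse (f x) * Df x v * inverse (f x))"] conjI ballI allI)
    fix x assume "x \<in> U"
    then show "((\<lambda>x. inverse (f x)) has_derivative (\<lambda>v. - (inverse (f x) * Df x v * inverse (f x)))) (at x)"
      using f sinv by (auto intro: has_derivative_inverse)
    fix v show "- (inverse (f x) * Df x (JR v) * inverse (f x)) = - \<i> * - (inverse (f x) * Df x v * inverse (f x))"
      using f \<open>x \<in> U\<close> by (simp add: algebra_simps)
  next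
    fix v
    obtain g1 where "smc U g1" "\<forall>x\<in>U. Df x v = g1 x" using f by blast
    moreover have "smc U (\<lambda>x. inverse (f x))" using sinv by (auto intro: smc.sinv)
    ultimately have "smc U (\<lambda>x. - 1 * (inverse (f x) * g1 x * inverse (f x)))"
      using smc.smult[OF smc.sconst[of U "-1"] smc.smult[OF smc.smult]] by blast
    then show "\<exists>h. smc U h \<and> (\<forall>x\<in>U. - (inverse (f x) * Df x v * inverse (f x)) = h x)"
      using \<open>\<forall>x\<in>U. Df x v = g1 x\<close> by (intro exI[of _ "\<lambda>x. - 1 * (inverse (f x) * g1 x * inverse (f x))"]) auto
  qed
qed

lemma local_deriv:
  assumes "open U" "x \<in> U" "\<And>y. y \<in> U \<Longrightarrow> g y = f y" "(g has_derivative D) (at x)"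
  shows "(f has_derivative D) (at x)" "frechet_derivative f (at x) = D"
proof -
  show "(f has_derivative D) (at x)"
    using has_derivative_transform_within_open[OF assms(4,1,2)] assms(3) by blast
  then show "frechet_derivative f (at x) = D" using frechet_derivative_at by metis
qed

lemma smc_vec_deriv:
  fixes U :: "(complex^'n) set" and F :: "complex^'n \<Rightarrow> complex^'n"
  assumes "\<forall>j. smc U (\<lambda>x. F x $ j)"
  shows "\<exists>D. (\<forall>x\<in>U. (F has_derivative D x) (at x) \<and> (\<forall>v. D x (JR v) = JR (D x v)))
            \<and> (\<forall>v. \<exists>G. (\<forall>j. smc U (\<lambda>x. G x $ j)) \<and> (\<forall>x\<in>U. D x v = G x))"
proof -
  have "\<forall>j. \<exists>D. (\<forall>x\<in>U. ((\<lambda>x. F x $ j) has_derivative D x) (at x) \<and> (\<forall>v. D x (JR v) = - \<i> * D x v))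
            \<and> (\<forall>v. \<exists>g. smc U g \<and> (\<forall>x\<in>U. D x v = g x))"
    using assms smc_deriv by blast
  then obtain DD where DD: "\<And>j. (\<forall>x\<in>U. ((\<lambda>x. F x $ j) has_derivative DD j x) (at x) \<and> (\<forall>v. DD j x (JR v) = - \<i> * DD j x v))
            \<and> (\<forall>v. \<exists>g. smc U g \<and> (\<forall>x\<in>U. DD j x v = g x))"
    by metis
  show ?thesis
  proof (intro exI[of _ "\<lambda>x v. \<chi> j. DD j x v"] conjI ballI allI)
    fix x assume x: "x \<in> U"
    have "((\<lambda>y. \<chi> j. F y $ j) has_derivative (\<lambda>v. \<chi> j. DD j x v)) (at x)"
      using DD x by (intro vec_has_derivative) blast
    then show "(F has_derivative (\<lambda>v. \<chi> j. DD j x v)) (at x)" by simp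
    fix v show "(\<chi> j. DD j x (JR v)) = JR (\<chi> j. DD j x v)"
      using DD x by (simp add: JR_def vec_eq_iff complex_eq_iff)
  next
    fix v
    have "\<forall>j. \<exists>g. smc U g \<and> (\<forall>x\<in>U. DD j x v = g x)" using DD by blast
    then obtain gg where gg: "\<And>j. smc U (gg j) \<and> (\<forall>x\<in>U. DD j x v = gg j x)" by metis
    show "\<exists>G. (\<forall>j. smc U (\<lambda>x. G x $ j)) \<and> (\<forall>x\<in>U. (\<chi> j. DD j x v) = G x)"
      using gg by (intro exI[of _ "\<lambda>x. \<chi> j. gg j x"]) (auto simp: vec_eq_iff)
  qed
qed

lemma smc_smooth:
  fixes U :: "(complex^'n) set" and F :: "complex^'n \<Rightarrow> complex^'n"
  assumes "open U" "\<forall>j. smc U (\<lambda>x. F x $ j)"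
  shows "smooth_on_open U F"
proof -
  have main: "\<exists>G. (\<forall>j. smc U (\<lambda>x. G x $ j)) \<and> (\<forall>x\<in>U. iter_dderiv F vs x = G x)"
    if "\<forall>j. smc U (\<lambda>x. F x $ j)" for vs and F :: "complex^'n \<Rightarrow> complex^'n"
    using that
  proof (induction vs arbitrary: F)
    case Nil then show ?case by auto
  next
    case (Cons v vs)
    then obtain G where G: "\<forall>j. smc U (\<lambda>x. G x $ j)" "\<forall>x\<in>U. iter_dderiv F vs x = G x" by blast
    obtain D where D: "\<forall>x\<in>U. (G has_derivative D x) (at x)"
      "\<forall>v. \<exists>G. (\<forall>j. smc U (\<lambda>x. G x $ j)) \<and> (\<forall>x\<in>U. D x v = G x)"
      using smc_vec_deriv[OF G(1)] by blast
    obtain G' where G': "\<forall>j. smc U (\<lambda>x. G' x $ j)" "\<forall>x\<in>U. D x v = G' x" using D(2) by blast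
    have "iter_dderiv F (v # vs) x = G' x" if "x \<in> U" for x
    proof -
      have "frechet_derivative (iter_dderiv F vs) (at x) = D x"
        using local_deriv(2)[OF assms(1) that, of G "iter_dderiv F vs"] G D that by auto
      then show ?thesis using G' that by simp
    qed
    then show ?case using G' by blast
  qed
  show ?thesis unfolding smooth_on_open_def
  proof (intro conjI allI ballI assms)
    fix vs x assume x: "x \<in> U"
    obtain G where G: "\<forall>j. smc U (\<lambda>x. G x $ j)" "\<forall>x\<in>U. iter_dderiv F vs x = G x"
      using main assms by blast
    obtain D where D: "\<forall>x\<in>U. (G has_derivative D x) (at x)"
      using smc_vec_deriv[OF G(1)] by blast
    have "(G has_derivative D x) (at x)" using D x by auto
    then have "(iter_dderiv F vs has_derivative D x) (at x)"
      using local_deriv(1)[OF assms(1) x, of G "iter_dderiv F vs"] G x by auto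
    then show "iter_dderiv F vs differentiable at x"
      unfolding differentiable_def by auto
  qed
qed

lemma deriv_unique_ray:
  fixes f :: "'a::real_normed_vector \<Rightarrow> 'b::real_normed_vector"
  assumes D1: "(f has_derivative D1) (at p within S)" and D2: "(f has_derivative D2) (at p within S)"
    and e: "e > 0" and ray: "\<And>t. t \<in> {0..e} \<Longrightarrow> p + t *\<^sub>R u \<in> S"
  shows "D1 u = D2 u"
proof -
  have L: "((\<lambda>t. p + t *\<^sub>R u) has_derivative (\<lambda>t. t *\<^sub>R u)) (at 0 within cbox 0 e)"
    by (auto intro!: derivative_eq_intros)
  have im: "(\<lambda>t. p + t *\<^sub>R u) ` cbox 0 e \<subseteq> S" using ray by auto
  have "(f has_derivative D1) (at (p + 0 *\<^sub>R u) within (\<lambda>t. p + t *\<^sub>R u) ` cbox 0 e)"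
    using has_derivative_subset[OF D1 im] by simp
  from has_derivative_in_compose[OF L this]
  have "((\<lambda>t. f (p + t *\<^sub>R u)) has_derivative (\<lambda>t. D1 (t *\<^sub>R u))) (at 0 within cbox 0 e)" .
  moreover have "(f has_derivative D2) (at (p + 0 *\<^sub>R u) within (\<lambda>t. p + t *\<^sub>R u) ` cbox 0 e)"
    using has_derivative_subset[OF D2 im] by simp
  from has_derivative_in_compose[OF L this]
  have "((\<lambda>t. f (p + t *\<^sub>R u)) has_derivative (\<lambda>t. D2 (t *\<^sub>R u))) (at 0 within cbox 0 e)" .
  ultimately have "(\<lambda>t. D1 (t *\<^sub>R u)) = (\<lambda>t. D2 (t *\<^sub>R u))"
    using e by (intro frechet_derivative_unique_within_closed_interval[of 0 e 0]) auto
  then show ?thesis by (metis scaleR_one)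
qed

lemma deriv_unique_sphere:
  fixes f :: "'a::real_inner \<Rightarrow> 'b::real_normed_vector"
  assumes D1: "(f has_derivative D1) (at p within cball 0 1)" and D2: "(f has_derivative D2) (at p within cball 0 1)"
    and p: "norm p = 1"
  shows "D1 = D2"
proof -
  have key: "D1 u = D2 u" if u: "p \<bullet> u < 0" for u
  proof (cases "u = 0")
    case True then show ?thesis
      using has_derivative_bounded_linear[OF D1] has_derivative_bounded_linear[OF D2]
      by (simp add: linear_simps)
  next
    case False
    define e where "e = - 2 * (p \<bullet> u) / (norm u)\<^sup>2"
    have nu: "(norm u)\<^sup>2 > 0" using False by simp
    have e: "e > 0" unfolding e_def using u nu by (simp add: divide_neg_pos)
    show ?thesis
    proof (rule deriv_unique_ray[OF D1 D2 e])
      fix t assume t: "t \<in> {0..e}"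
      have pp: "p \<bullet> p = 1" using p by (simp add: dot_square_norm)
      have "(norm (p + t *\<^sub>R u))\<^sup>2 = 1 + t * (2 * (p \<bullet> u) + t * (norm u)\<^sup>2)"
        by (simp only: power2_norm_eq_inner) (simp add: inner_add_left inner_add_right pp inner_commute algebra_simps)
      also have "\<dots> \<le> 1"
      proof -
        have "t * (norm u)\<^sup>2 \<le> e * (norm u)\<^sup>2" using t nu by (intro mult_right_mono) auto
        also have "\<dots> = - 2 * (p \<bullet> u)" unfolding e_def using nu by simp
        finally have "2 * (p \<bullet> u) + t * (norm u)\<^sup>2 \<le> 0" by simp
        then show ?thesis using t by (simp add: mult_nonneg_nonpos)
      qed
      finally have "(norm (p + t *\<^sub>R u))\<^sup>2 \<le> 1\<^sup>2" by simp
      then show "p + t *\<^sub>R u \<in> cball 0 1" by (simp add: power_le_one_iff abs_le_square_iff)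
    qed
  qed
  have l1: "linear D1" "linear D2"
    using has_derivative_bounded_linear[OF D1] has_derivative_bounded_linear[OF D2] bounded_linear.linear by auto
  show ?thesis
  proof
    fix v
    define k where "k = \<bar>p \<bullet> v\<bar> + 1"
    have pp: "p \<bullet> p = 1" using p by (simp add: dot_square_norm)
    have a: "D1 (v - k *\<^sub>R p) = D2 (v - k *\<^sub>R p)"
    proof (rule key)
      have "p \<bullet> (v - k *\<^sub>R p) = p \<bullet> v - k" by (simp add: inner_diff_right pp)
      then show "p \<bullet> (v - k *\<^sub>R p) < 0" unfolding k_def by linarith
    qed
    have b: "D1 (- p) = D2 (- p)" by (rule key) (simp add: pp)
    have "v = (v - k *\<^sub>R p) - k *\<^sub>R (- p)" by simp
    then have "D1 v = D1 (v - k *\<^sub>R p) - k *\<^sub>R D1 (- p)" "D2 v = D2 (v - k *\<^sub>R p) - k *\<^sub>R D2 (- p)"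
      using l1 by (metis linear_diff linear_scale)+
    then show "D1 v = D2 v" using a b by simp
  qed
qed

definition cip :: "complex^'n \<Rightarrow> complex^'n \<Rightarrow> complex" where
  "cip x y = (\<Sum>j\<in>UNIV. x $ j * cnj (y $ j))"

lemma cip_add_left: "cip (x + y) z = cip x z + cip y z"
  by (simp add: cip_def distrib_right sum.distrib)
lemma cip_add_right: "cip x (y + z) = cip x y + cip x z"
  by (simp add: cip_def distrib_left sum.distrib)
lemma cip_diff_left: "cip (x - y) z = cip x z - cip y z"
  by (simp add: cip_def left_diff_distrib sum_subtractf)
lemma cip_diff_right: "cip x (y - z) = cip x y - cip x z"
  by (simp add: cip_def right_diff_distrib sum_subtractf)
lemma cip_scale_left: "cip (c *s x) z = c * cip x z"
  by (simp add: cip_def sum_distrib_left mult.assoc)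
lemma cip_scale_right: "cip x (c *s z) = cnj c * cip x z"
  by (simp add: cip_def sum_distrib_left algebra_simps)
lemma cip_neg_left: "cip (- x) z = - cip x z"
  by (simp add: cip_def sum_negf)
lemma cip_neg_right: "cip x (- z) = - cip x z"
  by (simp add: cip_def sum_negf)
lemma cip_cnj: "cnj (cip x y) = cip y x"
  by (simp add: cip_def mult.commute)
lemma inner_cip: "x \<bullet> y = Re (cip x y)"
  by (simp add: cip_def inner_vec_def inner_complex_def Re_sum)
lemma cip_self: "cip x x = complex_of_real ((norm x)\<^sup>2)"
proof -
  have "Im (cip x x) = 0" by (simp add: cip_def Im_sum algebra_simps)
  moreover have "Re (cip x x) = (norm x)\<^sup>2" by (simp add: power2_norm_eq_inner inner_cip)
  ultimately show ?thesis by (simp add: complex_eq_iff)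
qed
lemma bdot_cip: "bdot b z = cip z b"
  by (simp add: bdot_def cip_def mult.commute)

lemma JR_nth: "JR v $ j = - \<i> * v $ j"
  by (simp add: JR_def complex_eq_iff)
lemma JR_scale: "JR v = (- \<i>) *s v"
  by (simp add: vec_eq_iff JR_nth)
lemma cip_JR_left: "cip (JR v) z = - \<i> * cip v z"
  by (simp only: JR_scale cip_scale_left)

lemma theta_cip: "theta p v = Im (cip v p) / (norm p)\<^sup>2"
  by (simp add: theta_def rad_def cip_def Im_sum algebra_simps)

lemma cip_bound: "cmod (cip x y) \<le> norm x * norm y"
proof (cases "cip x y = 0")
  case True then show ?thesis by simp
next
  case False
  define w where "w = cnj (cip x y) / cmod (cip x y)"
  have c0: "cmod (cip x y) \<noteq> 0" using False by simp
  have w1: "w * cnj w = 1"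
  proof -
    have "w * cnj w = (cnj (cip x y) * cip x y) / (complex_of_real (cmod (cip x y)))\<^sup>2"
      by (simp add: w_def power2_eq_square)
    also have "\<dots> = 1" using c0 by (simp add: mult.commute) (metis complex_norm_square of_real_power)
    finally show ?thesis .
  qed
  have "complex_of_real (cmod (cip x y)) = w * cip x y"
  proof -
    have "w * cip x y = (cnj (cip x y) * cip x y) / complex_of_real (cmod (cip x y))"
      by (simp add: w_def)
    also have "\<dots> = complex_of_real (cmod (cip x y))" using c0
      by (simp add: mult.commute power2_eq_square flip: complex_norm_square)
    finally show ?thesis by simp
  qed
  then have "cmod (cip x y) = Re (cip (w *s x) y)" by (metis Re_complex_of_real cip_scale_left)
  also have "\<dots> = (w *s x) \<bullet> y" by (simp add: inner_cip)
  also have "\<dots> \<le> norm (w *s x) * norm y" by (rule norm_cauchy_schwarz)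
  also have "norm (w *s x) = norm x"
  proof -
    have "complex_of_real ((norm (w *s x))\<^sup>2) = complex_of_real ((norm x)\<^sup>2)"
      by (simp only: cip_self[symmetric] cip_scale_left cip_scale_right) (simp add: mult.assoc[symmetric] w1 mult.commute)
    then have "(norm (w *s x))\<^sup>2 = (norm x)\<^sup>2" using of_real_eq_iff by blast
    then show ?thesis by (simp add: power2_eq_iff_nonneg)
  qed
  finally show ?thesis .
qed

lemma alg_norm:
  fixes S u uc N P :: complex
  assumes "u \<noteq> 0" "uc \<noteq> 0" "P \<noteq> 0" "P = 1 + S"
  shows "(S/u) * (S/uc) * N + (S/u) * ((1/P) * (1 + S/uc)) * (u - 1)
       + ((1/P) * (1 + S/u)) * (S/uc) * (uc - 1)
       + ((1/P) * (1 + S/u)) * ((1/P) * (1 + S/uc)) * (1 - S\<^sup>2)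
       = 1 - S\<^sup>2 * (1 - N) / (u * uc)"
  using assms(1-3) apply (simp add: field_simps) apply (simp add: assms(4)) by algebra

lemma alg_inv1:
  fixes S u P :: complex
  assumes "u \<noteq> 0" "P \<noteq> 0" "P = 1 + S"
  shows "1 - ((S/u) * (u - 1) + ((1/P) * (1 + S/u)) * (1 - S\<^sup>2)) = S\<^sup>2 / u"
  using assms(1-2) apply (simp add: field_simps) apply (simp add: assms(3)) by algebra

lemma alg_D1:
  fixes S u uc A tau P :: complex
  assumes "u \<noteq> 0" "uc \<noteq> 0" "P \<noteq> 0" "P = 1 + S"
  shows "(S/u) * (S/uc) * A + (S/u) * ((1/P) * (1 + S/uc)) * tau
     + (- S * tau / u\<^sup>2) * ((S/uc) + ((1/P) * (1 + S/uc)) * (u - 1)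
         + (1/P) * (S/uc) * (uc - 1) + (1/P) * ((1/P) * (1 + S/uc)) * (1 - S\<^sup>2))
     = S\<^sup>2 / (u*uc) * A"
  using assms(1-3) apply (simp add: field_simps) apply (simp add: assms(4)) by algebra

lemma alg_D2:
  fixes S u uc P Cwv B Ac tw tvc :: complex
  assumes "u \<noteq> 0" "uc \<noteq> 0" "P \<noteq> 0" "P = 1 + S"
  shows "(S/u) * (S/uc) * Cwv + (S/u) * (- S * tvc / uc\<^sup>2) * (B + (1/P) * tw)
     + (- S * tw / u\<^sup>2) * (S/uc) * (Ac + (1/P) * tvc)
     + (- S * tw / u\<^sup>2) * (- S * tvc / uc\<^sup>2) * (1 + (1/P) * (u - 1) + (1/P) * (uc - 1) + (1/P) * (1/P) * (1 - S\<^sup>2))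
     = S\<^sup>2 / (u*uc) * Cwv - S\<^sup>2 / (u*uc)\<^sup>2 * (tvc * u * B + tw * uc * Ac)"
  using assms(1-3) apply (simp add: field_simps) apply (simp add: assms(4)) by algebra
lemma alg_inv2:
  fixes S u :: complex
  assumes "u \<noteq> 0" "S \<noteq> 0" "1 + S \<noteq> 0"
  shows "u / S * ((1 / (1 + S)) * (1 + S / u)) - 1 / (1 + S) * (1 + u / S) = 0"
proof -
  obtain P where P: "P = 1 + S" by blast
  have "P \<noteq> 0" using P assms by simp
  then have "u / S * ((1 / P) * (1 + S / u)) - 1 / P * (1 + u / S) = 0"
    using assms(1,2) by (simp add: field_simps)
  then show ?thesis using P by simp
qed


lemma alg_norm':
  fixes S t tc N :: complex
  assumes "1 + t \<noteq> 0" "1 + tc \<noteq> 0" "1 + S \<noteq> 0"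
  shows "(S/(1+t)) * (S/(1+tc)) * N + (S/(1+t)) * ((1/(1+S)) * (1 + S/(1+tc))) * t
       + ((1/(1+S)) * (1 + S/(1+t))) * (S/(1+tc)) * tc
       + ((1/(1+S)) * (1 + S/(1+t))) * ((1/(1+S)) * (1 + S/(1+tc))) * (1 - S\<^sup>2)
       = 1 - S\<^sup>2 * (1 - N) / ((1+t) * (1+tc))"
  using alg_norm[OF assms refl, of N] by simp

lemma alg_inv1':
  fixes S t :: complex
  assumes "1 + t \<noteq> 0" "1 + S \<noteq> 0"
  shows "1 - ((S/(1+t)) * t + ((1/(1+S)) * (1 + S/(1+t))) * (1 - S\<^sup>2)) = S\<^sup>2 / (1+t)"
  using alg_inv1[OF assms refl] by simp


lemma alg_D1':
  fixes S t tc A tau :: complex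
  assumes "1 + t \<noteq> 0" "1 + tc \<noteq> 0" "1 + S \<noteq> 0"
  shows "(S/(1+t)) * (S/(1+tc)) * A + (S/(1+t)) * ((1/(1+S)) * (1 + S/(1+tc))) * tau
     + (- S * tau / (1+t)\<^sup>2) * ((S/(1+tc)) + ((1/(1+S)) * (1 + S/(1+tc))) * t
         + (1/(1+S)) * (S/(1+tc)) * tc + (1/(1+S)) * ((1/(1+S)) * (1 + S/(1+tc))) * (1 - S\<^sup>2))
     = S\<^sup>2 / ((1+t)*(1+tc)) * A"
  using alg_D1[OF assms refl, of A tau] by simp

lemma alg_D2':
  fixes S t tc Cwv B Ac tw tvc :: complex
  assumes "1 + t \<noteq> 0" "1 + tc \<noteq> 0" "1 + S \<noteq> 0"
  shows "(S/(1+t)) * (S/(1+tc)) * Cwv + (S/(1+t)) * (- S * tvc / (1+tc)\<^sup>2) * (B + (1/(1+S)) * tw)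
     + (- S * tw / (1+t)\<^sup>2) * (S/(1+tc)) * (Ac + (1/(1+S)) * tvc)
     + (- S * tw / (1+t)\<^sup>2) * (- S * tvc / (1+tc)\<^sup>2) * (1 + (1/(1+S)) * t + (1/(1+S)) * tc + (1/(1+S)) * (1/(1+S)) * (1 - S\<^sup>2))
     = S\<^sup>2 / ((1+t)*(1+tc)) * Cwv - S\<^sup>2 / ((1+t)*(1+tc))\<^sup>2 * (tvc * (1+t) * B + tw * (1+tc) * Ac)"
  using alg_D2[OF assms refl, where Cwv=Cwv and B=B and Ac=Ac and tw=tw and tvc=tvc] by simp

definition sB :: "complex^'n \<Rightarrow> real" where "sB b = sqrt (1 - (norm b)\<^sup>2)"
definition alphaB :: "complex^'n \<Rightarrow> complex^'n \<Rightarrow> complex" where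
  "alphaB b z = complex_of_real (sB b) / (1 + cip z b)"
definition betaB :: "complex^'n \<Rightarrow> complex^'n \<Rightarrow> complex" where
  "betaB b z = complex_of_real (1 / (1 + sB b)) * (1 + complex_of_real (sB b) / (1 + cip z b))"

lemma PhiB_repr: "PhiB b z = alphaB b z *s z + betaB b z *s b"
  by (simp add: PhiB_def alphaB_def betaB_def sB_def vec_eq_iff vector_scalar_mult_def bdot_cip Let_def)

lemma sB_pos: "norm b < 1 \<Longrightarrow> sB b > 0"
  unfolding sB_def by (simp add: abs_square_less_1)
lemma sB_sq: "norm b < 1 \<Longrightarrow> (sB b)\<^sup>2 = 1 - (norm b)\<^sup>2"
  unfolding sB_def by (simp add: abs_square_less_1 less_imp_le)
lemma cip_bb: "norm b < 1 \<Longrightarrow> cip b b = 1 - (complex_of_real (sB b))\<^sup>2"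
  by (simp add: cip_self sB_sq flip: of_real_power)
lemma sB_neg: "sB (- b) = sB b" by (simp add: sB_def)

lemma denom_nz:
  assumes "norm b < 1" "norm z \<le> 1"
  shows "1 + cip z b \<noteq> 0"
proof
  assume "1 + cip z b = 0"
  then have "cip z b = -1" by (metis add.commute add_eq_0_iff)
  then have "1 \<le> norm z * norm b" using cip_bound[of z b] by simp
  also have "\<dots> \<le> norm b" using assms by (intro mult_left_le_one_le) auto
  also have "\<dots> < 1" using assms by simp
  finally show False by simp
qed

lemma ofr: "complex_of_real (1 / (1 + r)) = 1 / (1 + complex_of_real r)"
  by simp

lemma cnj_alphaB: "cnj (alphaB b z) = complex_of_real (sB b) / (1 + cnj (cip z b))"
  by (simp add: alphaB_def)
lemma cnj_betaB: "cnj (betaB b z) = complex_of_real (1 / (1 + sB b)) * (1 + complex_of_real (sB b) / (1 + cnj (cip z b)))"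
  by (simp add: betaB_def)

lemma norm_PhiB_c:
  assumes b: "norm b < 1" and d: "1 + cip z b \<noteq> 0"
  shows "cip (PhiB b z) (PhiB b z) = 1 - (complex_of_real (sB b))\<^sup>2 * (1 - cip z z) / ((1 + cip z b) * (1 + cnj (cip z b)))"
proof -
  let ?S = "complex_of_real (sB b)"
  have dc: "1 + cnj (cip z b) \<noteq> 0" using d by (metis complex_cnj_add complex_cnj_one complex_cnj_zero_iff)
  have P: "1 + ?S \<noteq> 0" using sB_pos[OF b] by (metis of_real_1 of_real_add of_real_eq_0_iff add_pos_pos zero_less_one less_irrefl)
  let ?u = "1 + cip z b" and ?uc = "1 + cnj (cip z b)"
  have "cip (PhiB b z) (PhiB b z) = alphaB b z * cnj (alphaB b z) * cip z z + alphaB b z * cnj (betaB b z) * cip z b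
     + betaB b z * cnj (alphaB b z) * cip b z + betaB b z * cnj (betaB b z) * cip b b"
    unfolding PhiB_repr cip_add_left cip_add_right cip_scale_left cip_scale_right
    by algebra
  also have "\<dots> = (?S/(1 + cip z b)) * (?S/(1 + cnj (cip z b))) * cip z z + (?S/(1 + cip z b)) * ((1/(1 + ?S)) * (1 + ?S/(1 + cnj (cip z b)))) * cip z b
       + ((1/(1 + ?S)) * (1 + ?S/(1 + cip z b))) * (?S/(1 + cnj (cip z b))) * cnj (cip z b)
       + ((1/(1 + ?S)) * (1 + ?S/(1 + cip z b))) * ((1/(1 + ?S)) * (1 + ?S/(1 + cnj (cip z b)))) * (1 - ?S\<^sup>2)"
    unfolding cnj_alphaB cnj_betaB cip_bb[OF b] cip_cnj[of z b, symmetric]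
    unfolding alphaB_def betaB_def ofr by (rule refl)
  also have "\<dots> = 1 - ?S\<^sup>2 * (1 - cip z z) / ((1 + cip z b) * (1 + cnj (cip z b)))"
    by (rule alg_norm'[OF d dc P])
  finally show ?thesis .
qed


lemma norm_PhiB:
  assumes b: "norm b < 1" and d: "1 + cip z b \<noteq> 0"
  shows "(norm (PhiB b z))\<^sup>2 = 1 - (sB b)\<^sup>2 * (1 - (norm z)\<^sup>2) / (cmod (1 + cip z b))\<^sup>2"
proof -
  have e: "(1 + cip z b) * (1 + cnj (cip z b)) = complex_of_real ((cmod (1 + cip z b))\<^sup>2)"
    by (metis complex_cnj_add complex_cnj_one complex_norm_square)
  have "complex_of_real ((norm (PhiB b z))\<^sup>2) = complex_of_real (1 - (sB b)\<^sup>2 * (1 - (norm z)\<^sup>2) / (cmod (1 + cip z b))\<^sup>2)"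
    using norm_PhiB_c[OF b d] unfolding cip_self e by simp
  then show ?thesis using of_real_eq_iff by blast
qed

lemma PhiB_cball:
  assumes b: "norm b < 1" and z: "norm z \<le> 1"
  shows "norm (PhiB b z) \<le> 1"
proof -
  have z2: "(norm z)\<^sup>2 \<le> 1" using z by (simp add: power_le_one)
  have "(sB b)\<^sup>2 * (1 - (norm z)\<^sup>2) / (cmod (1 + cip z b))\<^sup>2 \<ge> 0"
    using z2 by (intro divide_nonneg_nonneg mult_nonneg_nonneg) simp_all
  then have "(norm (PhiB b z))\<^sup>2 \<le> 1\<^sup>2" unfolding norm_PhiB[OF b denom_nz[OF b z]] by simp
  then show ?thesis using power2_le_imp_le[of "norm (PhiB b z)" 1] by simp
qed

lemma PhiB_sphere:
  assumes b: "norm b < 1" and z: "norm z = 1"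
  shows "norm (PhiB b z) = 1"
proof -
  have zz: "norm z \<le> 1" using z by simp
  have "(norm (PhiB b z))\<^sup>2 = 1" unfolding norm_PhiB[OF b denom_nz[OF b zz]] using z by simp
  then show ?thesis using power2_eq_1_iff[of "norm (PhiB b z)"] norm_ge_zero[of "PhiB b z"] by linarith
qed

lemma PhiB_inverse:
  assumes b: "norm b < 1" and d: "1 + cip z b \<noteq> 0"
  shows "PhiB (- b) (PhiB b z) = z"
proof -
  let ?S = "complex_of_real (sB b)" and ?C = "complex_of_real (1 / (1 + sB b))"
  let ?u = "1 + cip z b" and ?w = "PhiB b z"
  have S0: "?S \<noteq> 0" using sB_pos[OF b] by simp
  have P: "1 + ?S \<noteq> 0" using sB_pos[OF b] by (metis of_real_1 of_real_add of_real_eq_0_iff add_pos_pos zero_less_one less_irrefl)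
  have C: "?C = 1 / (1 + ?S)" by simp
  have h: "cip ?w b = (?S / ?u) * cip z b + ((1 / (1 + ?S)) * (1 + ?S / ?u)) * (1 - ?S\<^sup>2)"
    unfolding PhiB_repr cip_add_left cip_scale_left cip_bb[OF b] alphaB_def betaB_def ofr by (rule refl)
  have "1 - cip ?w b = ?S\<^sup>2 / ?u" by (simp only: h alg_inv1'[OF d P])
  then have "1 + cip ?w (- b) = ?S\<^sup>2 / ?u" by (simp add: cip_neg_right)
  then have a2: "alphaB (- b) ?w = ?u / ?S" and b2: "betaB (- b) ?w = ?C * (1 + ?u / ?S)"
    using S0 by (simp_all add: alphaB_def betaB_def sB_neg power2_eq_square)
  have k1: "?u / ?S * alphaB b z = 1" using S0 d by (simp add: alphaB_def)
  have k2: "?u / ?S * betaB b z - ?C * (1 + ?u / ?S) = 0"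
    unfolding betaB_def C by (rule alg_inv2[OF d S0 P])
  have e1: "PhiB (- b) ?w = (?u / ?S) *s ?w + (?C * (1 + ?u / ?S)) *s (- b)"
    using PhiB_repr[of "- b" ?w] unfolding a2 b2 .
  show ?thesis
  proof (subst vec_eq_iff, intro allI)
    fix j
    have "PhiB (- b) ?w $ j = (?u / ?S) * (alphaB b z * z $ j + betaB b z * b $ j) + (?C * (1 + ?u / ?S)) * (- b $ j)"
      unfolding e1 by (simp add: PhiB_repr[of b z] vector_scalar_mult_def)
    also have "\<dots> = ((?u / ?S) * alphaB b z) * z $ j + ((?u / ?S) * betaB b z - ?C * (1 + ?u / ?S)) * b $ j"
      by algebra
    also have "\<dots> = z $ j" unfolding k1 k2 by simp
    finally show "PhiB (- b) ?w $ j = z $ j" .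
  qed
qed

lemma cip_scaleR_left: "cip (r *\<^sub>R x) y = complex_of_real r * cip x y"
proof -
  have "(r *\<^sub>R x) $ j = complex_of_real r * x $ j" for j
    by (simp only: vector_scaleR_component) (simp add: scaleR_conv_of_real)
  then show ?thesis by (simp add: cip_def sum_distrib_left mult.assoc)
qed

lemma bl_cip_left: "bounded_linear (\<lambda>z. cip z b)"
proof (rule bounded_linear_intro[where K = "norm b"])
  show "cip (x + y) b = cip x b + cip y b" for x y by (rule cip_add_left)
  show "cip (r *\<^sub>R x) b = r *\<^sub>R cip x b" for r x by (simp only: cip_scaleR_left) (simp add: scaleR_conv_of_real)
  show "norm (cip x b) \<le> norm x * norm b" for x by (rule cip_bound)
qed

lemma bl_cip_right: "bounded_linear (\<lambda>z. cip w z)"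
proof -
  have "bounded_linear (\<lambda>z. cnj (cip z w))"
    using bounded_linear_compose[OF bounded_linear_cnj bl_cip_left[of w]] by (simp add: o_def)
  then show ?thesis by (simp add: cip_cnj)
qed

lemma has_derivative_cip_left[derivative_intros]:
  "(f has_derivative f') F \<Longrightarrow> ((\<lambda>x. cip (f x) b) has_derivative (\<lambda>v. cip (f' v) b)) F"
  by (rule bounded_linear.has_derivative[OF bl_cip_left])

lemma has_derivative_cip_right[derivative_intros]:
  "(f has_derivative f') F \<Longrightarrow> ((\<lambda>x. cip w (f x)) has_derivative (\<lambda>v. cip w (f' v))) F"
  by (rule bounded_linear.has_derivative[OF bl_cip_right])

lemma has_derivative_vec_nth'[derivative_intros]:
  "(f has_derivative f') F \<Longrightarrow> ((\<lambda>x. f x $ j) has_derivative (\<lambda>v. f' v $ j)) F"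
  by (rule bounded_linear.has_derivative[OF bounded_linear_vec_nth])

lemma has_derivative_Re'[derivative_intros]:
  "(f has_derivative f') F \<Longrightarrow> ((\<lambda>x. Re (f x)) has_derivative (\<lambda>v. Re (f' v))) F"
  by (rule bounded_linear.has_derivative[OF bounded_linear_Re])

lemma has_derivative_Im'[derivative_intros]:
  "(f has_derivative f') F \<Longrightarrow> ((\<lambda>x. Im (f x)) has_derivative (\<lambda>v. Im (f' v))) F"
  by (rule bounded_linear.has_derivative[OF bounded_linear_Im])

definition CB :: "complex^'n \<Rightarrow> complex" where "CB b = complex_of_real (1 / (1 + sB b))"
definition kap :: "complex^'n \<Rightarrow> complex^'n \<Rightarrow> complex^'n \<Rightarrow> complex" where
  "kap b z v = - complex_of_real (sB b) * cip v b / (1 + cip z b)\<^sup>2"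
definition DPhi :: "complex^'n \<Rightarrow> complex^'n \<Rightarrow> complex^'n \<Rightarrow> complex^'n" where
  "DPhi b z v = alphaB b z *s v + kap b z v *s (z + CB b *s b)"

lemma PhiB_comp: "PhiB b y $ j = complex_of_real (sB b) * inverse (1 + cip y b) * y $ j
   + CB b * (1 + complex_of_real (sB b) * inverse (1 + cip y b)) * b $ j"
  by (simp add: PhiB_repr alphaB_def betaB_def CB_def vector_scalar_mult_def divide_inverse)

lemma PhiB_has_derivative:
  assumes d: "1 + cip z b \<noteq> 0"
  shows "(PhiB b has_derivative DPhi b z) (at z within S)"
proof -
  let ?S = "complex_of_real (sB b)"
  have "((\<lambda>y. \<chi> j. PhiB b y $ j) has_derivative (\<lambda>v. \<chi> j. DPhi b z v $ j)) (at z within S)"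
  proof (rule vec_has_derivative)
    fix j
    have "((\<lambda>y. ?S * inverse (1 + cip y b) * y $ j + CB b * (1 + ?S * inverse (1 + cip y b)) * b $ j)
       has_derivative (\<lambda>v. DPhi b z v $ j)) (at z within S)"
      apply (rule derivative_eq_intros d refl)+
      apply (rule ext)
      apply (simp add: DPhi_def kap_def alphaB_def vector_scalar_mult_def field_simps power2_eq_square)
      apply (simp add: add_divide_distrib)
      done
    then
    show "((\<lambda>y. PhiB b y $ j) has_derivative (\<lambda>v. DPhi b z v $ j)) (at z within S)"
      unfolding PhiB_comp by simp
  qed
  then show ?thesis by simp
qed

lemma normsq_sum: "(norm b)\<^sup>2 = (\<Sum>j\<in>UNIV. (Re (b $ j))\<^sup>2) + (\<Sum>j\<in>UNIV. (Im (b $ j))\<^sup>2)"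
proof -
  have "(norm b)\<^sup>2 = Re (cip b b)" by (simp add: cip_self)
  then show ?thesis by (simp add: cip_def Re_sum sum.distrib power2_eq_square)
qed

lemma Re_cip: "Re (cip z b) = (\<Sum>j\<in>UNIV. Re (b $ j) * Re (z $ j)) + (\<Sum>j\<in>UNIV. Im (b $ j) * Im (z $ j))"
  by (simp add: cip_def Re_sum sum.distrib mult.commute)
lemma Im_cip: "Im (cip z b) = (\<Sum>j\<in>UNIV. Re (b $ j) * Im (z $ j)) - (\<Sum>j\<in>UNIV. Im (b $ j) * Re (z $ j))"
  by (simp add: cip_def Im_sum sum_subtractf mult.commute)

lemma WB_eq: "norm b < 1 \<Longrightarrow> WB b z = (sB b)\<^sup>2 / ((Re (1 + cip z b))\<^sup>2 + (Im (1 + cip z b))\<^sup>2)"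
proof -
  assume b: "norm b < 1"
  have n: "1 - (\<Sum>j\<in>UNIV. (Re (b $ j))\<^sup>2) - (\<Sum>j\<in>UNIV. (Im (b $ j))\<^sup>2) = (sB b)\<^sup>2"
    using sB_sq[OF b] normsq_sum[of b] by simp
  have d: "(1 + (\<Sum>j\<in>UNIV. Re (b $ j) * Re (z $ j)) + (\<Sum>j\<in>UNIV. Im (b $ j) * Im (z $ j)))\<^sup>2
      + ((\<Sum>j\<in>UNIV. Im (b $ j) * Re (z $ j)) - (\<Sum>j\<in>UNIV. Re (b $ j) * Im (z $ j)))\<^sup>2
      = (Re (1 + cip z b))\<^sup>2 + (Im (1 + cip z b))\<^sup>2"
    by (simp add: Re_cip Im_cip power2_commute add.assoc)
  show ?thesis unfolding WB_def n d ..
qed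

lemma divsq: "(a::real) / d\<^sup>2 = a * inverse d * inverse d"
  by (simp add: power2_eq_square divide_inverse)

definition dWf :: "complex^'n \<Rightarrow> complex^'n \<Rightarrow> complex^'n \<Rightarrow> real" where
  "dWf b z v = - (sB b)\<^sup>2 * (2 * Re (1 + cip z b) * Re (cip v b) + 2 * Im (1 + cip z b) * Im (cip v b))
      / ((Re (1 + cip z b))\<^sup>2 + (Im (1 + cip z b))\<^sup>2)\<^sup>2"

lemma WB_has_derivative:
  assumes b: "norm b < 1" and d: "1 + cip z b \<noteq> 0"
  shows "(WB b has_derivative dWf b z) (at z)"
proof -
  have WB: "WB b = (\<lambda>z. (sB b)\<^sup>2 * inverse ((Re (1 + cip z b))\<^sup>2 + (Im (1 + cip z b))\<^sup>2))"
    using WB_eq[OF b] by (simp add: fun_eq_iff divide_inverse)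
  have nz: "(Re (1 + cip z b))\<^sup>2 + (Im (1 + cip z b))\<^sup>2 \<noteq> 0"
    using d by (simp add: complex_eq_iff sum_power2_eq_zero_iff)
  show ?thesis unfolding WB
    apply (rule derivative_eq_intros refl nz)+
    apply (simp add: dWf_def fun_eq_iff)
    apply (simp only: divsq)
    apply (simp add: algebra_simps)
    done
qed

lemma rad_has_derivative:
  assumes "q \<noteq> 0"
  shows "(rad has_derivative (\<lambda>v. (q \<bullet> v) / norm q)) (at q)"
proof -
  have r: "rad = (\<lambda>z. norm z)" by (simp add: fun_eq_iff rad_def)
  show ?thesis unfolding r using has_derivative_norm[OF assms]
    by (simp add: sgn_div_norm inner_commute divide_inverse mult.commute)
qed

lemma theta_has_derivative:
  assumes q: "q \<noteq> 0"
  shows "((\<lambda>q. theta q w) has_derivative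
     (\<lambda>u. Im (cip w u) / (q \<bullet> q) - Im (cip w q) * (2 * (q \<bullet> u)) / (q \<bullet> q)\<^sup>2)) (at q)"
proof -
  have th: "(\<lambda>q. theta q w) = (\<lambda>q. Im (cip w q) * inverse (q \<bullet> q))"
    by (simp add: fun_eq_iff theta_cip power2_norm_eq_inner divide_inverse)
  have nz: "q \<bullet> q \<noteq> 0" using q by simp
  show ?thesis unfolding th
    apply (rule derivative_eq_intros refl nz)+
    apply (simp add: fun_eq_iff field_simps inner_commute power2_eq_square)
    done
qed

lemma cnj_CB: "cnj (CB b) = CB b" by (simp add: CB_def)
lemma CB_eq: "CB b = 1 / (1 + complex_of_real (sB b))" by (simp add: CB_def)
lemma cnj_kap: "cnj (kap b z v) = - complex_of_real (sB b) * cip b v / (1 + cnj (cip z b))\<^sup>2"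
  by (simp add: kap_def cip_cnj)
lemma cip_pp: "norm p = 1 \<Longrightarrow> cip p p = 1" by (simp add: cip_self)

lemma K1:
  assumes b: "norm b < 1" and p: "norm p = 1"
  shows "cip (DPhi b p v) (PhiB b p) = (complex_of_real (sB b))\<^sup>2 / ((1 + cip p b) * (1 + cnj (cip p b))) * cip v p"
proof -
  let ?S = "complex_of_real (sB b)"
  have d: "1 + cip p b \<noteq> 0" using denom_nz[OF b] p by simp
  have dc: "1 + cnj (cip p b) \<noteq> 0" using d by (metis complex_cnj_add complex_cnj_one complex_cnj_zero_iff)
  have P: "1 + ?S \<noteq> 0" using sB_pos[OF b] by (metis of_real_1 of_real_add of_real_eq_0_iff add_pos_pos zero_less_one less_irrefl)
  have "cip (DPhi b p v) (PhiB b p) = alphaB b p * cnj (alphaB b p) * cip v p + alphaB b p * cnj (betaB b p) * cip v b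
     + kap b p v * (cnj (alphaB b p) + cnj (betaB b p) * cip p b + CB b * cnj (alphaB b p) * cnj (cip p b)
        + CB b * cnj (betaB b p) * (1 - ?S\<^sup>2))"
    unfolding DPhi_def PhiB_repr cip_add_left cip_add_right cip_scale_left cip_scale_right
      cip_pp[OF p] cip_bb[OF b] cip_cnj[of p b, symmetric]
    by algebra
  also have "\<dots> = (?S/(1 + cip p b)) * (?S/(1 + cnj (cip p b))) * cip v p
     + (?S/(1 + cip p b)) * ((1/(1 + ?S)) * (1 + ?S/(1 + cnj (cip p b)))) * cip v b
     + (- ?S * cip v b / (1 + cip p b)\<^sup>2) * ((?S/(1 + cnj (cip p b))) + ((1/(1 + ?S)) * (1 + ?S/(1 + cnj (cip p b)))) * cip p b
         + (1/(1 + ?S)) * (?S/(1 + cnj (cip p b))) * cnj (cip p b)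
         + (1/(1 + ?S)) * ((1/(1 + ?S)) * (1 + ?S/(1 + cnj (cip p b)))) * (1 - ?S\<^sup>2))"
    unfolding cnj_alphaB cnj_betaB
    unfolding alphaB_def kap_def CB_eq ofr by (rule refl)
  also have "\<dots> = ?S\<^sup>2 / ((1 + cip p b) * (1 + cnj (cip p b))) * cip v p"
    by (rule alg_D1'[OF d dc P])
  finally show ?thesis .
qed

lemma K2:
  assumes b: "norm b < 1" and p: "norm p = 1"
  shows "cip (DPhi b p w) (DPhi b p v) = (complex_of_real (sB b))\<^sup>2 / ((1 + cip p b) * (1 + cnj (cip p b))) * cip w v
     - (complex_of_real (sB b))\<^sup>2 / ((1 + cip p b) * (1 + cnj (cip p b)))\<^sup>2
        * (cip b v * (1 + cip p b) * cip w p + cip w b * (1 + cnj (cip p b)) * cip p v)"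
proof -
  let ?S = "complex_of_real (sB b)"
  have d: "1 + cip p b \<noteq> 0" using denom_nz[OF b] p by simp
  have dc: "1 + cnj (cip p b) \<noteq> 0" using d by (metis complex_cnj_add complex_cnj_one complex_cnj_zero_iff)
  have P: "1 + ?S \<noteq> 0" using sB_pos[OF b] by (metis of_real_1 of_real_add of_real_eq_0_iff add_pos_pos zero_less_one less_irrefl)
  have "cip (DPhi b p w) (DPhi b p v) = alphaB b p * cnj (alphaB b p) * cip w v
     + alphaB b p * cnj (kap b p v) * (cip w p + CB b * cip w b)
     + kap b p w * cnj (alphaB b p) * (cip p v + CB b * cip b v)
     + kap b p w * cnj (kap b p v) * (1 + CB b * cip p b + CB b * cnj (cip p b) + CB b * CB b * (1 - ?S\<^sup>2))"
    unfolding DPhi_def cip_add_left cip_add_right cip_scale_left cip_scale_right cnj_CB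
      cip_pp[OF p] cip_bb[OF b] cip_cnj[of p b, symmetric]
    by algebra
  also have "\<dots> = (?S/(1 + cip p b)) * (?S/(1 + cnj (cip p b))) * cip w v
     + (?S/(1 + cip p b)) * (- ?S * cip b v / (1 + cnj (cip p b))\<^sup>2) * (cip w p + (1/(1 + ?S)) * cip w b)
     + (- ?S * cip w b / (1 + cip p b)\<^sup>2) * (?S/(1 + cnj (cip p b))) * (cip p v + (1/(1 + ?S)) * cip b v)
     + (- ?S * cip w b / (1 + cip p b)\<^sup>2) * (- ?S * cip b v / (1 + cnj (cip p b))\<^sup>2)
        * (1 + (1/(1 + ?S)) * cip p b + (1/(1 + ?S)) * cnj (cip p b) + (1/(1 + ?S)) * (1/(1 + ?S)) * (1 - ?S\<^sup>2))"
    unfolding cnj_alphaB cnj_kap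
    unfolding alphaB_def kap_def CB_eq by (rule refl)
  also have "\<dots> = ?S\<^sup>2 / ((1 + cip p b) * (1 + cnj (cip p b))) * cip w v
     - ?S\<^sup>2 / ((1 + cip p b) * (1 + cnj (cip p b)))\<^sup>2
        * (cip b v * (1 + cip p b) * cip w p + cip w b * (1 + cnj (cip p b)) * cip p v)"
    by (rule alg_D2'[OF d dc P])
  finally show ?thesis .
qed

lemma final_alg:
  fixes W s2 N ur ui Ar Ai Br Bi Xi vr vi wr wi :: real
  assumes N: "N \<noteq> 0" and W: "W = s2 / N"
  shows "2 * (W * Xi - s2 / N\<^sup>2 * ((vr*ur + vi*ui)*Bi + (vr*ui - vi*ur)*Br - (wr*ur + wi*ui)*Ai + (wi*ur - wr*ui)*Ar))
           - 2 * W\<^sup>2 * Bi * Ar + 2 * W\<^sup>2 * Ai * Br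
       = W * (2 * Xi - 2 * Bi * Ar + 2 * Ai * Br)
         + 2 * (W - W\<^sup>2) * 1 * (Ar * Bi - Br * Ai)
         + ((- s2 * (2*ur * vr + 2*ui * vi) / N\<^sup>2) * Bi - (- s2 * (2*ur*wr + 2*ui*wi) / N\<^sup>2) * Ai)
         + (Ar * (- s2 * (2*ur*wi - 2*ui*wr) / N\<^sup>2) - Br * (- s2 * (2*ur * vi - 2*ui * vr) / N\<^sup>2))"
  using N unfolding W by (simp add: field_simps)

lemma U_open: "open {z. 1 + cip z b \<noteq> 0}"
proof -
  have "continuous_on UNIV (\<lambda>z. 1 + cip z b)"
    by (intro continuous_intros linear_continuous_on bl_cip_left)
  then show ?thesis using open_Collect_neq[of "\<lambda>z. 1 + cip z b" "\<lambda>z. 0"] by simp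
qed

lemma smc_PhiB: "smc {z. 1 + cip z b \<noteq> 0} (\<lambda>z. PhiB b z $ j)"
proof -
  let ?U = "{z. 1 + cip z b \<noteq> 0}" and ?S = "complex_of_real (sB b)"
  have l: "smc ?U (\<lambda>z. cip z b)"
    by (rule smc.slin) (auto simp: bl_cip_left cip_JR_left)
  have n: "smc ?U (\<lambda>z. z $ j)"
    by (rule smc.slin) (auto simp: JR_nth)
  have c1: "smc ?U (\<lambda>z. 1 + cip z b)" using smc.sadd[OF smc.sconst l] .
  have i: "smc ?U (\<lambda>z. inverse (1 + cip z b))" using smc.sinv[OF c1] by auto
  have a: "smc ?U (\<lambda>z. ?S * inverse (1 + cip z b) * z $ j)"
    using smc.smult[OF smc.smult[OF smc.sconst i] n] .
  have bb: "smc ?U (\<lambda>z. CB b * (1 + ?S * inverse (1 + cip z b)) * b $ j)"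
    using smc.smult[OF smc.smult[OF smc.sconst smc.sadd[OF smc.sconst smc.smult[OF smc.sconst i]]] smc.sconst] .
  show ?thesis unfolding PhiB_comp using smc.sadd[OF a bb] .
qed

lemma smooth_PhiB:
  fixes b :: "complex^'n"
  assumes b: "norm b < 1"
  shows "smooth_on (cball 0 1) (PhiB b)"
  unfolding smooth_on_def
proof (intro exI conjI)
  show "cball 0 1 \<subseteq> {z. 1 + cip z b \<noteq> 0}" using denom_nz[OF b] by auto
  show "smooth_on_open {z. 1 + cip z b \<noteq> 0} (PhiB b)"
    by (rule smc_smooth[OF U_open]) (auto intro: smc_PhiB)
  show "\<forall>x\<in>cball 0 1. PhiB b x = PhiB b x" by simp
qed

lemma holo_PhiB:
  fixes b :: "complex^'n"
  assumes b: "norm b < 1"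
  shows "JR_holomorphic_on (cball 0 1) (PhiB b)"
  unfolding JR_holomorphic_on_def
proof
  fix z :: "complex^'n" assume z: "z \<in> cball 0 1"
  obtain D where D: "\<forall>x\<in>{z. 1 + cip z b \<noteq> 0}. (PhiB b has_derivative D x) (at x) \<and> (\<forall>v. D x (JR v) = JR (D x v))"
    using smc_vec_deriv[of "{z. 1 + cip z b \<noteq> 0}" "PhiB b"] smc_PhiB by blast
  have "z \<in> {z. 1 + cip z b \<noteq> 0}" using denom_nz[OF b] z by auto
  then show "\<exists>D. (PhiB b has_derivative D) (at z within cball 0 1) \<and> (\<forall>v. JR (D v) = D (JR v))"
    using D by (intro exI[of _ "D z"]) (auto intro: has_derivative_at_withinI)
qed

lemma diffeo_PhiB:
  fixes b :: "complex^'n"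
  assumes b: "norm b < 1"
  shows "diffeo_betw (cball 0 1) (cball 0 1) (PhiB b)"
proof -
  have b': "norm (- b) < 1" using b by simp
  have l: "\<forall>z\<in>cball 0 1. PhiB (- b) (PhiB b z) = z"
    using PhiB_inverse[OF b] denom_nz[OF b] by auto
  have r: "\<forall>y\<in>cball 0 1. PhiB b (PhiB (- b) y) = y"
    using PhiB_inverse[OF b'] denom_nz[OF b'] by auto
  have i1: "PhiB b ` cball 0 1 \<subseteq> cball 0 1" using PhiB_cball[OF b] by auto
  have i2: "PhiB (- b) ` cball 0 1 \<subseteq> cball 0 1" using PhiB_cball[OF b'] by auto
  show ?thesis unfolding diffeo_betw_def
    using bij_betw_byWitness[OF l r i1 i2] smooth_PhiB[OF b] smooth_PhiB[OF b'] l r by blast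
qed

lemma dr_sphere: "norm x = 1 \<Longrightarrow> dr x u = x \<bullet> u"
proof -
  assume x: "norm x = 1"
  then have "x \<noteq> 0" by auto
  from frechet_derivative_at[OF rad_has_derivative[OF this]] show ?thesis
    unfolding dr_def dfun_def using x by simp
qed

lemma theta_sphere: "norm x = 1 \<Longrightarrow> theta x u = Im (cip u x)"
  by (simp add: theta_cip)

lemma d1theta_sphere:
  assumes x: "norm x = 1"
  shows "d1 theta x u w = Im (cip w u) - Im (cip w x) * (2 * (x \<bullet> u)) - (Im (cip u w) - Im (cip u x) * (2 * (x \<bullet> w)))"
proof -
  have x0: "x \<noteq> 0" using x by auto
  have xx: "x \<bullet> x = 1" using x by (simp add: dot_square_norm)
  note e1 = frechet_derivative_at[OF theta_has_derivative[OF x0, of w], symmetric]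
  note e2 = frechet_derivative_at[OF theta_has_derivative[OF x0, of u], symmetric]
  show ?thesis unfolding d1_def e1 e2 xx by simp
qed

lemma dW_eq:
  assumes b: "norm b < 1" and p: "norm p \<le> 1"
  shows "dfun (WB b) p v = dWf b p v"
  unfolding dfun_def using frechet_derivative_at[OF WB_has_derivative[OF b denom_nz[OF b p]]] by simp

lemma pullback_PhiB:
  fixes b p :: "complex^'n"
  assumes b: "norm b < 1" and p: "norm p = 1"
    and D: "(PhiB b has_derivative D) (at p within cball 0 1)"
  shows "(\<forall>v. pullback1 (PhiB b) D dr p v = WB b p * dr p v)
        \<and> (\<forall>v. pullback1 (PhiB b) D theta p v = WB b p * theta p v)
        \<and> (\<forall>v w. pullback2 (PhiB b) D (d1 theta) p v w =
              WB b p * d1 theta p v w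
            + 2 * (WB b p - (WB b p)\<^sup>2) * rad p * wedge dr theta p v w
            + wedge (dfun (WB b)) theta p v w
            + wedge dr (compJ (dfun (WB b))) p v w)"
proof -
  let ?S = "complex_of_real (sB b)"
  have p1: "norm p \<le> 1" using p by simp
  have d: "1 + cip p b \<noteq> 0" using denom_nz[OF b p1] .
  have DD: "D = DPhi b p"
    using deriv_unique_sphere[OF D PhiB_has_derivative[OF d] p] .
  define q where "q = PhiB b p"
  have q: "norm q = 1" unfolding q_def using PhiB_sphere[OF b p] .
  define t where "t = cip p b"
  define ur where "ur = 1 + Re t"
  define ui where "ui = Im t"
  define N where "N = ur\<^sup>2 + ui\<^sup>2"
  define s2 where "s2 = (sB b)\<^sup>2"
  define W where "W = WB b p"
  have uN: "(1 + t) * (1 + cnj t) = complex_of_real N"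
    by (simp add: complex_eq_iff N_def ur_def ui_def power2_eq_square algebra_simps)
  have N0: "N \<noteq> 0" using d unfolding N_def ur_def ui_def t_def
    by (simp add: complex_eq_iff sum_power2_eq_zero_iff)
  have Wd: "W = s2 / N" unfolding W_def WB_eq[OF b] s2_def N_def ur_def ui_def t_def by simp
  have S2: "?S\<^sup>2 = complex_of_real s2" by (simp add: s2_def)
  have Wc: "?S\<^sup>2 / ((1 + t) * (1 + cnj t)) = complex_of_real W"
    unfolding uN S2 Wd by simp
  have KA: "cip (DPhi b p v) q = complex_of_real W * cip v p" for v
    using K1[OF b p, of v] unfolding q_def t_def[symmetric] Wc .
  have KB: "cip (DPhi b p w) (DPhi b p v) = complex_of_real W * cip w v
     - complex_of_real (s2 / N\<^sup>2) * (cnj (cip v b) * (1 + t) * cip w p + cip w b * (1 + cnj t) * cnj (cip v p))" for v w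
  proof -
    have "?S\<^sup>2 / ((1 + t) * (1 + cnj t))\<^sup>2 = complex_of_real (s2 / N\<^sup>2)"
      unfolding uN S2 by simp
    then show ?thesis using K2[OF b p, of w v] unfolding t_def[symmetric] Wc
      by (simp add: cip_cnj)
  qed
  have qD: "q \<bullet> DPhi b p v = W * Re (cip v p)" for v
  proof -
    have "q \<bullet> DPhi b p v = Re (cnj (cip (DPhi b p v) q))" by (simp add: inner_cip cip_cnj[of "DPhi b p v" q])
    then show ?thesis unfolding KA by simp
  qed
  have pv: "p \<bullet> v = Re (cip v p)" for v by (simp add: inner_cip cip_cnj[of v p, symmetric])
  have ImKA: "Im (cip (DPhi b p v) q) = W * Im (cip v p)" for v unfolding KA by simp
  have rp: "rad p = 1" using p by (simp add: rad_def)
  have P1: "pullback1 (PhiB b) D dr p v = WB b p * dr p v" for v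
    unfolding pullback1_def DD q_def[symmetric] dr_sphere[OF q] dr_sphere[OF p] qD pv W_def ..
  have P2: "pullback1 (PhiB b) D theta p v = WB b p * theta p v" for v
    unfolding pullback1_def DD q_def[symmetric] theta_sphere[OF q] theta_sphere[OF p] ImKA W_def ..
  have P3: "pullback2 (PhiB b) D (d1 theta) p v w =
              WB b p * d1 theta p v w
            + 2 * (WB b p - (WB b p)\<^sup>2) * rad p * wedge dr theta p v w
            + wedge (dfun (WB b)) theta p v w
            + wedge dr (compJ (dfun (WB b))) p v w" for v w
  proof -
    define Ar where "Ar = Re (cip v p)"
    define Ai where "Ai = Im (cip v p)"
    define Br where "Br = Re (cip w p)"
    define Bi where "Bi = Im (cip w p)"
    define Xi where "Xi = Im (cip w v)"
    define vr where "vr = Re (cip v b)"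
    define vi where "vi = Im (cip v b)"
    define wr where "wr = Re (cip w b)"
    define wi where "wi = Im (cip w b)"
    define ImDD where "ImDD = Im (cip (DPhi b p w) (DPhi b p v))"
    have f1: "pullback2 (PhiB b) D (d1 theta) p v w = 2 * ImDD - 2 * W\<^sup>2 * Bi * Ar + 2 * W\<^sup>2 * Ai * Br"
    proof -
      have c: "Im (cip (DPhi b p v) (DPhi b p w)) = - ImDD"
        unfolding ImDD_def by (simp add: cip_cnj[of "DPhi b p w" "DPhi b p v", symmetric])
      show ?thesis
        unfolding pullback2_def DD q_def[symmetric] d1theta_sphere[OF q] c qD ImKA
        unfolding ImDD_def[symmetric] Ar_def[symmetric] Ai_def[symmetric] Br_def[symmetric] Bi_def[symmetric]
        by (simp add: power2_eq_square algebra_simps)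
    qed
    define KK where "KK = s2 / N\<^sup>2"
    have f2': "ImDD = W * Xi - KK * ((vr*ur + vi*ui)*Bi + (vr*ui - vi*ur)*Br - (wr*ur + wi*ui)*Ai + (wi*ur - wr*ui)*Ar)"
      unfolding ImDD_def KB KK_def[symmetric]
      by (simp add: Xi_def vr_def vi_def wr_def wi_def Ar_def Ai_def Br_def Bi_def ur_def ui_def algebra_simps)
    have f2: "ImDD = W * Xi - s2 / N\<^sup>2 * ((vr*ur + vi*ui)*Bi + (vr*ui - vi*ur)*Br - (wr*ur + wi*ui)*Ai + (wi*ur - wr*ui)*Ar)"
      using f2' unfolding KK_def .
    have f3: "d1 theta p v w = 2 * Xi - 2 * Bi * Ar + 2 * Ai * Br"
    proof -
      have c: "Im (cip v w) = - Xi" unfolding Xi_def by (simp add: cip_cnj[of w v, symmetric])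
      show ?thesis unfolding d1theta_sphere[OF p] c pv
        unfolding Xi_def[symmetric] Ar_def[symmetric] Ai_def[symmetric] Br_def[symmetric] Bi_def[symmetric]
        by (simp add: algebra_simps)
    qed
    have f4: "wedge dr theta p v w = Ar * Bi - Br * Ai"
      unfolding wedge_def dr_sphere[OF p] theta_sphere[OF p] pv Ar_def Ai_def Br_def Bi_def ..
    have dWv: "dfun (WB b) p x = - s2 * (2 * ur * Re (cip x b) + 2 * ui * Im (cip x b)) / N\<^sup>2" for x
      unfolding dW_eq[OF b p1] dWf_def s2_def N_def ur_def ui_def t_def by simp
    have f5: "wedge (dfun (WB b)) theta p v w
        = (- s2 * (2*ur * vr + 2*ui * vi) / N\<^sup>2) * Bi - (- s2 * (2*ur*wr + 2*ui*wi) / N\<^sup>2) * Ai"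
      unfolding wedge_def dWv theta_sphere[OF p] vr_def vi_def wr_def wi_def Ai_def Bi_def ..
    have f6: "wedge dr (compJ (dfun (WB b))) p v w
        = Ar * (- s2 * (2*ur*wi - 2*ui*wr) / N\<^sup>2) - Br * (- s2 * (2*ur * vi - 2*ui * vr) / N\<^sup>2)"
      unfolding wedge_def compJ_def dWv dr_sphere[OF p] pv cip_JR_left
      by (simp add: vr_def vi_def wr_def wi_def Ar_def Br_def)
    show ?thesis
      unfolding f1 f2 f3 f4 f5 f6 rp W_def[symmetric]
      by (rule final_alg[OF N0 Wd])
  qed
  show ?thesis using P1 P2 P3 by blast
qed

theorem proposition2p1:
  fixes b :: "complex ^ 'n"
  assumes "norm b < 1"
  shows "\<exists>\<Phi>. (\<forall>z\<in>ball 0 1. \<Phi> z = PhiB b z)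
     \<and> diffeo_betw (cball 0 1) (cball 0 1) \<Phi>
     \<and> JR_holomorphic_on (cball 0 1) \<Phi>
     \<and> (\<forall>p\<in>sphere 0 1. \<forall>D. (\<Phi> has_derivative D) (at p within cball 0 1) \<longrightarrow>
          (\<forall>v. pullback1 \<Phi> D dr p v = WB b p * dr p v)
        \<and> (\<forall>v. pullback1 \<Phi> D theta p v = WB b p * theta p v)
        \<and> (\<forall>v w. pullback2 \<Phi> D (d1 theta) p v w =
              WB b p * d1 theta p v w
            + 2 * (WB b p - (WB b p)\<^sup>2) * rad p * wedge dr theta p v w
            + wedge (dfun (WB b)) theta p v w
            + wedge dr (compJ (dfun (WB b))) p v w))"
proof -
  have b: "norm b < 1" by (rule assms)
  show ?thesis
  proof (rule exI[of _ "PhiB b"], intro conjI)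
    show "\<forall>z\<in>ball 0 1. PhiB b z = PhiB b z" by simp
    show "diffeo_betw (cball 0 1) (cball 0 1) (PhiB b)" by (rule diffeo_PhiB[OF b])
    show "JR_holomorphic_on (cball 0 1) (PhiB b)" by (rule holo_PhiB[OF b])
  next
    show "\<forall>p\<in>sphere 0 1. \<forall>D. (PhiB b has_derivative D) (at p within cball 0 1) \<longrightarrow>
          (\<forall>v. pullback1 (PhiB b) D dr p v = WB b p * dr p v)
        \<and> (\<forall>v. pullback1 (PhiB b) D theta p v = WB b p * theta p v)
        \<and> (\<forall>v w. pullback2 (PhiB b) D (d1 theta) p v w =
              WB b p * d1 theta p v w
            + 2 * (WB b p - (WB b p)\<^sup>2) * rad p * wedge dr theta p v w
            + wedge (dfun (WB b)) theta p v w
            + wedge dr (compJ (dfun (WB b))) p v w)"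
    proof (intro ballI allI impI)
      fix p D assume p: "p \<in> sphere (0::complex^'n) 1" and D: "(PhiB b has_derivative D) (at p within cball 0 1)"
      have pn: "norm p = 1" using p by simp
      show "(\<forall>v. pullback1 (PhiB b) D dr p v = WB b p * dr p v)
        \<and> (\<forall>v. pullback1 (PhiB b) D theta p v = WB b p * theta p v)
        \<and> (\<forall>v w. pullback2 (PhiB b) D (d1 theta) p v w =
              WB b p * d1 theta p v w
            + 2 * (WB b p - (WB b p)\<^sup>2) * rad p * wedge dr theta p v w
            + wedge (dfun (WB b)) theta p v w
            + wedge dr (compJ (dfun (WB b))) p v w)"
        by (rule pullback_PhiB[OF b pn D])
    qed
  qed
qed

end
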